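(* Let \[ W(\eta,\omega_G)=\tfrac12(\omega_G-\bar\omega_G)^TM(\omega_G-\bar\omega_G)+\mathbf{1}^T\Gamma\cos(\eta)-\mathbf{1}^T\Gamma\cos(\bar\eta)-(\Gamma\sin(\bar\eta))^T(\eta-\bar\eta). \] Then the time derivative of $W$ along a solution $(\eta,\omega_G)$ of $\dot\eta=B_S^T(\eta)\omega_G$, $M\dot\omega_G=-A\omega_G-B_G\Gamma\sin(\eta)+u$, initialized in a neighborhood of $(\bar\eta,\bar\omega_G)$ with $B_L\Gamma\sin(\eta(0))=B_L\Gamma\sin(\bar\eta)$, satisfies \[ \dot W=-(\omega_G-\bar\omega_G)^TA(\omega_G-\bar\omega_G)+(\omega_G-\bar\omega_G)^T(u-\bar u) \] on the interval of definition of the solution.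
   Context: A connected undirected graph with $n$ nodes and $m$ edges, nodes partitioned into $n_g$ generator and $n_\ell$ load nodes; $B$ is an incidence matrix partitioned row-wise as $B=\begin{bmatrix}B_G^T & B_L^T\end{bmatrix}^T$. $\Gamma=\mathrm{diag}(\gamma_k)$ is positive definite, $M,A$ positive definite diagonal. $\sin,\cos$ act elementwise, $\Omega=(-\frac{\pi}{2},\frac{\pi}{2})^m$, $\Gamma'(\eta)=\Gamma\,\mathrm{diag}(\cos(\eta_k))$, $B_S(\eta)=B_G\big(I-\Gamma'(\eta)B_L^T(B_L\Gamma'(\eta)B_L^T)^{-1}B_L\big)$, and $\mathbf{1}$ is the all-ones vector. $\bar u$ is a constant input and $(\bar\eta,\bar\omega_G)$ with $\bar\eta\in\Omega\cap\operatorname{im}B^T$, $\bar\omega_G=\mathbf{1}\omega^0$ ($\omega^0\in\mathbb{R}$) satisfies $0=B_S^T(\bar\eta)\bar\omega_G$ and $0=-A\bar\omega_G-B_G\Gamma\sin(\bar\eta)+\bar u$. *)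

theory Defs
  imports Complex_Main "Jordan_Normal_Form.Matrix" "Jordan_Normal_Form.Gauss_Jordan_Elimination"
begin

text \<open>Nodes are indexed 0..<n, the first ng being generator nodes, the remaining nl load nodes;
 edges are indexed 0..<m.\<close>

definition incidence_mat :: "real mat \<Rightarrow> nat \<Rightarrow> nat \<Rightarrow> bool" where
  "incidence_mat B n m \<longleftrightarrow> B \<in> carrier_mat n m \<and>
     (\<forall>j<m. \<exists>a<n. \<exists>b<n. a \<noteq> b \<and>
        (\<forall>i<n. B $$ (i,j) = (if i = a then 1 else if i = b then -1 else 0)))"

definition inc_adj :: "real mat \<Rightarrow> (nat \<times> nat) set" where
  "inc_adj B = {(i,k). i < dim_row B \<and> k < dim_row B \<and> i \<noteq> k \<and>
       (\<exists>j<dim_col B. B $$ (i,j) \<noteq> 0 \<and> B $$ (k,j) \<noteq> 0)}"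

definition connected_graph :: "real mat \<Rightarrow> bool" where
  "connected_graph B \<longleftrightarrow> (\<forall>i<dim_row B. \<forall>k<dim_row B. (i,k) \<in> (inc_adj B)\<^sup>*)"

definition gen_block :: "real mat \<Rightarrow> nat \<Rightarrow> real mat" where
  "gen_block B ng = mat ng (dim_col B) (\<lambda>(i,j). B $$ (i,j))"

definition load_block :: "real mat \<Rightarrow> nat \<Rightarrow> real mat" where
  "load_block B ng = mat (dim_row B - ng) (dim_col B) (\<lambda>(i,j). B $$ (ng + i, j))"

definition diag_vec :: "real vec \<Rightarrow> real mat" where
  "diag_vec v = mat (dim_vec v) (dim_vec v) (\<lambda>(i,j). if i = j then v $ i else 0)"

definition pos_diag :: "real mat \<Rightarrow> nat \<Rightarrow> bool" where
  "pos_diag D k \<longleftrightarrow> D \<in> carrier_mat k k \<and> diagonal_mat D \<and> (\<forall>i<k. D $$ (i,i) > 0)"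

definition ones_vec :: "nat \<Rightarrow> real vec" where "ones_vec k = vec k (\<lambda>_. 1)"

definition vsin :: "real vec \<Rightarrow> real vec" where "vsin v = map_vec sin v"
definition vcos :: "real vec \<Rightarrow> real vec" where "vcos v = map_vec cos v"

text \<open>Matrix inverse (the inverse computed by Gauss--Jordan; meaningful when invertible).\<close>
definition minv :: "real mat \<Rightarrow> real mat" where
  "minv X = the (mat_inverse X)"

definition Gamma' :: "real mat \<Rightarrow> real vec \<Rightarrow> real mat" where
  "Gamma' \<Gamma> \<eta> = \<Gamma> * diag_vec (vcos \<eta>)"

definition B_S :: "real mat \<Rightarrow> nat \<Rightarrow> real mat \<Rightarrow> real vec \<Rightarrow> real mat" where
  "B_S B ng \<Gamma> \<eta> =
     (let BG = gen_block B ng; BL = load_block B ng; G' = Gamma' \<Gamma> \<eta> in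
      BG * (one_mat (dim_col B) - G' * transpose_mat BL * minv (BL * G' * transpose_mat BL) * BL))"

definition Omega :: "nat \<Rightarrow> real vec set" where
  "Omega m = {v. v \<in> carrier_vec m \<and> (\<forall>k<m. - (pi/2) < v $ k \<and> v $ k < pi/2)}"

text \<open>The Lyapunov function W(eta, omega_G) (with the potential term -1^T Gamma cos eta).\<close>
definition W_fun :: "real mat \<Rightarrow> real mat \<Rightarrow> real vec \<Rightarrow> real vec \<Rightarrow> real vec \<Rightarrow> real vec \<Rightarrow> real" where
  "W_fun M \<Gamma> \<eta>b \<omega>b \<eta> \<omega> =
     1/2 * ((\<omega> - \<omega>b) \<bullet> (M *\<^sub>v (\<omega> - \<omega>b)))
     - ones_vec (dim_vec \<eta>) \<bullet> (\<Gamma> *\<^sub>v vcos \<eta>)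
     + ones_vec (dim_vec \<eta>b) \<bullet> (\<Gamma> *\<^sub>v vcos \<eta>b)
     - (\<Gamma> *\<^sub>v vsin \<eta>b) \<bullet> (\<eta> - \<eta>b)"

end

theory Submission imports Defs "Jordan_Normal_Form.Determinant" begin

lemma const_on_interval:
  fixes f :: "real \<Rightarrow> real"
  assumes I: "\<forall>a\<in>I. \<forall>b\<in>I. {a..b} \<subseteq> I"
    and d: "\<And>t. t \<in> I \<Longrightarrow> (f has_real_derivative 0) (at t within I)"
    and x: "x \<in> I" and y: "y \<in> I" and xy: "x < y"
  shows "f y = f x"
proof (rule DERIV_isconst_end[OF xy])
  have sub: "{x..y} \<subseteq> I" using I x y by auto
  show "continuous_on {x..y} f"
    unfolding continuous_on_eq_continuous_within
    using sub d DERIV_continuous unfolding continuous_within by (meson subsetD tendsto_within_subset)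
  fix t assume "x < t" "t < y"
  then have "at t within I = at t"
    by (intro at_within_open_subset[of t "{x<..<y}"]) (use sub in auto)
  moreover have "t \<in> I" using sub \<open>x < t\<close> \<open>t < y\<close> by auto
  ultimately show "DERIV f t :> 0" using d by metis
qed

lemma const_on_interval':
  fixes f :: "real \<Rightarrow> real"
  assumes I: "\<forall>a\<in>I. \<forall>b\<in>I. {a..b} \<subseteq> I"
    and d: "\<And>t. t \<in> I \<Longrightarrow> (f has_real_derivative 0) (at t within I)"
    and x: "x \<in> I" and y: "y \<in> I"
  shows "f y = f x"
  using const_on_interval[OF I d] x y by (metis linorder_neq_iff)

lemma diag_mult_vec:
  assumes D: "D \<in> carrier_mat k k" "diagonal_mat D" and x: "x \<in> carrier_vec k"
  shows "D *\<^sub>v x = vec k (\<lambda>i. D $$ (i,i) * x $ i)"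
proof (rule eq_vecI)
  show "dim_vec (D *\<^sub>v x) = dim_vec (vec k (\<lambda>i. D $$ (i,i) * x $ i))" using D by simp
  fix i assume i: "i < dim_vec (vec k (\<lambda>i. D $$ (i, i) * x $ i))"
  then have ik: "i < k" by simp
  have "(D *\<^sub>v x) $ i = (\<Sum>j\<in>{0..<k}. D $$ (i,j) * x $ j)"
    using D x ik by (simp add: scalar_prod_def)
  also have "\<dots> = (\<Sum>j\<in>{0..<k}. if j = i then D $$ (i,i) * x $ i else 0)"
    using D ik by (intro sum.cong) (auto simp: diagonal_mat_def)
  also have "\<dots> = D $$ (i,i) * x $ i" using ik by simp
  finally show "(D *\<^sub>v x) $ i = vec k (\<lambda>i. D $$ (i, i) * x $ i) $ i" using ik by simp
qed

lemma diag_vec_carrier: "v \<in> carrier_vec k \<Longrightarrow> diag_vec v \<in> carrier_mat k k"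
  by (auto simp: diag_vec_def)

lemma diag_vec_diag: "diagonal_mat (diag_vec v)"
  by (auto simp: diag_vec_def diagonal_mat_def)

lemma diag_vec_index: "v \<in> carrier_vec k \<Longrightarrow> i < k \<Longrightarrow> diag_vec v $$ (i,i) = v $ i"
  by (auto simp: diag_vec_def)

lemma Gamma'_mult:
  assumes G: "pos_diag \<Gamma> m" and e: "e \<in> carrier_vec m" and x: "x \<in> carrier_vec m"
  shows "Gamma' \<Gamma> e \<in> carrier_mat m m"
    "Gamma' \<Gamma> e *\<^sub>v x = vec m (\<lambda>i. \<Gamma> $$ (i,i) * (cos (e $ i) * x $ i))"
proof -
  have ce: "vcos e \<in> carrier_vec m" using e by (simp add: vcos_def)
  have Gc: "\<Gamma> \<in> carrier_mat m m" "diagonal_mat \<Gamma>" using G by (auto simp: pos_diag_def)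
  show "Gamma' \<Gamma> e \<in> carrier_mat m m" unfolding Gamma'_def using Gc ce diag_vec_carrier by auto
  have "Gamma' \<Gamma> e *\<^sub>v x = \<Gamma> *\<^sub>v (diag_vec (vcos e) *\<^sub>v x)"
    unfolding Gamma'_def using Gc ce x diag_vec_carrier by (metis assoc_mult_mat_vec)
  also have "diag_vec (vcos e) *\<^sub>v x = vec m (\<lambda>i. cos (e $ i) * x $ i)"
    using diag_mult_vec[OF diag_vec_carrier[OF ce] diag_vec_diag x] ce e
    by (auto simp: diag_vec_index vcos_def)
  also have "\<Gamma> *\<^sub>v vec m (\<lambda>i. cos (e $ i) * x $ i) = vec m (\<lambda>i. \<Gamma> $$ (i,i) * (cos (e $ i) * x $ i))"
    using diag_mult_vec[OF Gc] by auto
  finally show "Gamma' \<Gamma> e *\<^sub>v x = vec m (\<lambda>i. \<Gamma> $$ (i,i) * (cos (e $ i) * x $ i))" .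
qed

lemma sum_split_nat: "(\<Sum>i\<in>{0..<a+b}. f i) = (\<Sum>i\<in>{0..<a}. f i) + (\<Sum>i\<in>{0..<b}. f (a+i :: nat))"
proof -
  have "(\<Sum>i\<in>{0..<a+b}. f i) = (\<Sum>i\<in>{0..<a}. f i) + (\<Sum>i\<in>{a..<a+b}. f i)"
    by (simp add: sum.atLeastLessThan_concat)
  also have "(\<Sum>i\<in>{a..<a+b}. f i) = (\<Sum>i\<in>{0..<b}. f (a+i))"
    using sum.shift_bounds_nat_ivl[of f 0 a b] by (simp add: add.commute)
  finally show ?thesis .
qed

lemma inc_dims: assumes "incidence_mat B (ng+nl) m"
  shows "gen_block B ng \<in> carrier_mat ng m" "load_block B ng \<in> carrier_mat nl m"
    "B \<in> carrier_mat (ng+nl) m"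
  using assms by (auto simp: incidence_mat_def gen_block_def load_block_def)

lemma col_sum_zero: assumes inc: "incidence_mat B n m" and j: "j < m"
  shows "(\<Sum>i\<in>{0..<n}. B $$ (i,j)) = 0"
proof -
  obtain a b where ab: "a < n" "b < n" "a \<noteq> b"
    "\<forall>i<n. B $$ (i,j) = (if i = a then 1 else if i = b then -1 else 0)"
    using inc j unfolding incidence_mat_def by blast
  have "(\<Sum>i\<in>{0..<n}. B $$ (i,j)) = (\<Sum>i\<in>{0..<n}. (if i = a then 1 else 0) - (if i = b then 1 else 0))"
    using ab by (intro sum.cong) auto
  also have "\<dots> = 0" using ab by (simp add: sum_subtractf)
  finally show ?thesis .
qed

lemma kernel_trivial:
  assumes inc: "incidence_mat B (ng+nl) m" and conn: "connected_graph B" and ng: "0 < ng"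
    and v: "v \<in> carrier_vec nl"
    and h: "\<And>j. j < m \<Longrightarrow> (\<Sum>i\<in>{0..<nl}. B $$ (ng+i, j) * v $ i) = 0"
  shows "v = 0\<^sub>v nl"
proof -
  define n where "n = ng + nl"
  define y where "y i = (if i < ng then 0 else v $ (i - ng))" for i
  have Bc: "B \<in> carrier_mat n m" using inc unfolding n_def incidence_mat_def by auto
  have ysum: "(\<Sum>i\<in>{0..<n}. B $$ (i,j) * y i) = 0" if j: "j < m" for j
    unfolding n_def sum_split_nat using h[OF j] by (simp add: y_def)
  have adj: "y i = y k" if "(i,k) \<in> inc_adj B" for i k
  proof -
    from that obtain j where ik: "i < n" "k < n" "i \<noteq> k" "j < m" "B $$ (i,j) \<noteq> 0" "B $$ (k,j) \<noteq> 0"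
      using Bc unfolding inc_adj_def by auto
    obtain a b where ab: "a < n" "b < n" "a \<noteq> b"
      "\<forall>i<n. B $$ (i,j) = (if i = a then 1 else if i = b then -1 else 0)"
      using inc ik(4) unfolding incidence_mat_def n_def by blast
    have "(\<Sum>i\<in>{0..<n}. B $$ (i,j) * y i) = (\<Sum>i\<in>{0..<n}. (if i = a then y a else 0) - (if i = b then y b else 0))"
      using ab by (intro sum.cong) auto
    also have "\<dots> = y a - y b" using ab by (simp add: sum_subtractf)
    finally have "y a = y b" using ysum[OF ik(4)] by simp
    moreover have "i = a \<or> i = b" "k = a \<or> k = b" using ab ik by (metis (full_types))+
    ultimately show ?thesis using ik(3) by auto
  qed
  have "y k = y 0" if "(0,k) \<in> (inc_adj B)\<^sup>*" for k
    using that by (induction rule: rtrancl_induct) (auto dest: adj)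
  then have "y k = 0" if "k < n" for k
    using conn that ng Bc unfolding connected_graph_def by (auto simp: y_def n_def)
  then have "v $ i = 0" if "i < nl" for i
    using that unfolding y_def n_def by (metis add_diff_cancel_left' add_less_cancel_left not_add_less1)
  then show ?thesis
    using v by (intro eq_vecI) auto
qed

lemma K_inv:
  assumes inc: "incidence_mat B (ng+nl) m" and conn: "connected_graph B" and ng: "0 < ng"
    and G: "pos_diag \<Gamma> m" and e: "e \<in> Omega m"
  defines "BL \<equiv> load_block B ng"
  defines "K \<equiv> BL * Gamma' \<Gamma> e * transpose_mat BL"
  shows "minv K * K = 1\<^sub>m nl" "minv K \<in> carrier_mat nl nl"
proof -
  have ec: "e \<in> carrier_vec m" and cpos: "\<And>k. k < m \<Longrightarrow> cos (e $ k) > 0"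
    using e unfolding Omega_def by (auto intro: cos_gt_zero_pi)
  have BL: "BL \<in> carrier_mat nl m" using inc_dims[OF inc] by (simp add: BL_def)
  have G'c: "Gamma' \<Gamma> e \<in> carrier_mat m m" using Gamma'_mult(1)[OF G ec ec] .
  have Kc: "K \<in> carrier_mat nl nl" unfolding K_def using BL G'c by auto
  have "det K \<noteq> 0"
  proof
    assume "det K = 0"
    then obtain v where v: "v \<in> carrier_vec nl" "v \<noteq> 0\<^sub>v nl" "K *\<^sub>v v = 0\<^sub>v nl"
      using det_0_iff_vec_prod_zero[OF Kc] by auto
    define p where "p = transpose_mat BL *\<^sub>v v"
    have pc: "p \<in> carrier_vec m" using BL v by (simp add: p_def)
    have "K *\<^sub>v v = BL *\<^sub>v (Gamma' \<Gamma> e *\<^sub>v p)"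
      unfolding K_def p_def using BL G'c v
      using assoc_mult_mat_vec[of BL nl m "Gamma' \<Gamma> e" m p] assoc_mult_mat_vec[of "BL * Gamma' \<Gamma> e" nl m "transpose_mat BL" nl v] by auto
    then have "0 = v \<bullet> (BL *\<^sub>v (Gamma' \<Gamma> e *\<^sub>v p))" using v(1,3) by (metis scalar_prod_right_zero)
    also have "\<dots> = p \<bullet> (Gamma' \<Gamma> e *\<^sub>v p)"
      unfolding p_def using transpose_vec_mult_scalar[OF BL _ v(1)] G'c pc p_def by auto
    also have "\<dots> = (\<Sum>i\<in>{0..<m}. \<Gamma> $$ (i,i) * cos (e $ i) * (p $ i)^2)"
      using Gamma'_mult[OF G ec pc] pc
      by (simp add: scalar_prod_def power2_eq_square ac_simps)
    finally have s0: "(\<Sum>i\<in>{0..<m}. \<Gamma> $$ (i,i) * cos (e $ i) * (p $ i)^2) = 0" by simp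
    have gpos: "\<Gamma> $$ (i,i) > 0" if "i < m" for i using G that by (auto simp: pos_diag_def)
    have "\<forall>i\<in>{0..<m}. \<Gamma> $$ (i,i) * cos (e $ i) * (p $ i)^2 = 0"
      using s0 by (subst sum_nonneg_eq_0_iff[symmetric]) (auto intro!: mult_nonneg_nonneg less_imp_le[OF gpos] less_imp_le[OF cpos])
    then have p0: "p $ j = 0" if "j < m" for j using that gpos[OF that] cpos[OF that] by force
    have "v = 0\<^sub>v nl"
    proof (rule kernel_trivial[OF inc conn ng v(1)])
      fix j assume j: "j < m"
      have "p $ j = (\<Sum>i\<in>{0..<nl}. BL $$ (i,j) * v $ i)"
        using BL v j by (simp add: p_def scalar_prod_def mult.commute)
      also have "\<dots> = (\<Sum>i\<in>{0..<nl}. B $$ (ng+i, j) * v $ i)"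
        using BL j inc unfolding BL_def load_block_def incidence_mat_def
        by (intro sum.cong) auto
      finally show "(\<Sum>i\<in>{0..<nl}. B $$ (ng+i, j) * v $ i) = 0" using p0[OF j] by simp
    qed
    with v(2) show False by simp
  qed
  then have U: "K \<in> Units (ring_mat TYPE(real) nl (b::unit))" by (rule det_non_zero_imp_unit[OF Kc])
  have "mat_inverse K \<noteq> None"
  proof
    assume "mat_inverse K = None"
    from mat_inverse(1)[OF Kc this, where b=b] U show False by simp
  qed
  then obtain X where X: "mat_inverse K = Some X" by auto
  then have "minv K = X" by (simp add: minv_def)
  then show "minv K * K = 1\<^sub>m nl" "minv K \<in> carrier_mat nl nl"
    using mat_inverse(2)[OF Kc X] by auto
qed

lemma mult_zero_vec_right: "A \<in> carrier_mat nr nc \<Longrightarrow> A *\<^sub>v 0\<^sub>v nc = 0\<^sub>v nr"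
  by (intro eq_vecI) (auto simp: scalar_prod_def)

lemma BS_facts:
  assumes inc: "incidence_mat B (ng+nl) m" and conn: "connected_graph B" and ng: "0 < ng"
    and G: "pos_diag \<Gamma> m" and e: "e \<in> Omega m"
  shows "B_S B ng \<Gamma> e \<in> carrier_mat ng m"
    "\<And>z. z \<in> carrier_vec m \<Longrightarrow> load_block B ng *\<^sub>v z = 0\<^sub>v nl \<Longrightarrow>
        B_S B ng \<Gamma> e *\<^sub>v z = gen_block B ng *\<^sub>v z"
    "\<And>y. y \<in> carrier_vec nl \<Longrightarrow>
        B_S B ng \<Gamma> e *\<^sub>v (Gamma' \<Gamma> e *\<^sub>v (transpose_mat (load_block B ng) *\<^sub>v y)) = 0\<^sub>v ng"
proof -
  define BL where "BL = load_block B ng"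
  define BG where "BG = gen_block B ng"
  define G' where "G' = Gamma' \<Gamma> e"
  define X where "X = minv (BL * G' * transpose_mat BL)"
  define Q where "Q = G' * transpose_mat BL * X * BL"
  have ec: "e \<in> carrier_vec m" using e by (auto simp: Omega_def)
  have BL: "BL \<in> carrier_mat nl m" and BG: "BG \<in> carrier_mat ng m"
    using inc_dims[OF inc] by (auto simp: BL_def BG_def)
  have dc: "dim_col B = m" using inc_dims(3)[OF inc] by auto
  have G'c: "G' \<in> carrier_mat m m" using Gamma'_mult(1)[OF G ec ec] by (simp add: G'_def)
  have Xi: "X * (BL * G' * transpose_mat BL) = 1\<^sub>m nl" "X \<in> carrier_mat nl nl"
    using K_inv[OF inc conn ng G e] by (auto simp: X_def BL_def G'_def)
  have Qc: "Q \<in> carrier_mat m m" using G'c BL Xi(2) unfolding Q_def by (meson mult_carrier_mat transpose_carrier_mat)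
  have BSeq: "B_S B ng \<Gamma> e = BG * (1\<^sub>m m - Q)"
    unfolding B_S_def Let_def Q_def X_def G'_def BL_def BG_def dc ..
  show "B_S B ng \<Gamma> e \<in> carrier_mat ng m" unfolding BSeq using BG Qc
    by (meson minus_carrier_mat mult_carrier_mat one_carrier_mat)
  have Qv: "Q *\<^sub>v v = G' *\<^sub>v (transpose_mat BL *\<^sub>v (X *\<^sub>v (BL *\<^sub>v v)))" if v: "v \<in> carrier_vec m" for v
  proof -
    have "Q *\<^sub>v v = (G' * transpose_mat BL * X) *\<^sub>v (BL *\<^sub>v v)"
      unfolding Q_def using G'c BL Xi v by (intro assoc_mult_mat_vec) auto
    also have "\<dots> = (G' * transpose_mat BL) *\<^sub>v (X *\<^sub>v (BL *\<^sub>v v))"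
      using G'c BL Xi v by (intro assoc_mult_mat_vec) auto
    also have "\<dots> = G' *\<^sub>v (transpose_mat BL *\<^sub>v (X *\<^sub>v (BL *\<^sub>v v)))"
      using G'c BL Xi v by (intro assoc_mult_mat_vec) auto
    finally show ?thesis .
  qed
  have BSv: "B_S B ng \<Gamma> e *\<^sub>v v = BG *\<^sub>v (v - Q *\<^sub>v v)" if v: "v \<in> carrier_vec m" for v
  proof -
    have "B_S B ng \<Gamma> e *\<^sub>v v = BG *\<^sub>v ((1\<^sub>m m - Q) *\<^sub>v v)"
      unfolding BSeq using BG Qc v by (intro assoc_mult_mat_vec) auto
    also have "(1\<^sub>m m - Q) *\<^sub>v v = v - Q *\<^sub>v v"
      using Qc v by (subst minus_mult_distrib_mat_vec[of _ m m]) auto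
    finally show ?thesis .
  qed
  show "B_S B ng \<Gamma> e *\<^sub>v z = gen_block B ng *\<^sub>v z"
    if z: "z \<in> carrier_vec m" and h: "load_block B ng *\<^sub>v z = 0\<^sub>v nl" for z
  proof -
    have "Q *\<^sub>v z = G' *\<^sub>v (transpose_mat BL *\<^sub>v (X *\<^sub>v 0\<^sub>v nl))"
      using Qv[OF z] h by (simp add: BL_def)
    also have "\<dots> = 0\<^sub>v m" using G'c BL Xi by (simp add: mult_zero_vec_right)
    finally show ?thesis using BSv[OF z] z by (simp add: BG_def)
  qed
  show "B_S B ng \<Gamma> e *\<^sub>v (Gamma' \<Gamma> e *\<^sub>v (transpose_mat (load_block B ng) *\<^sub>v y)) = 0\<^sub>v ng"
    if y: "y \<in> carrier_vec nl" for y
  proof -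
    define v where "v = G' *\<^sub>v (transpose_mat BL *\<^sub>v y)"
    have vc: "v \<in> carrier_vec m" using G'c BL y by (simp add: v_def)
    have BLG: "BL * G' \<in> carrier_mat nl m" using BL G'c by simp
    have Kc: "BL * G' * transpose_mat BL \<in> carrier_mat nl nl" using BLG BL by simp
    have "(BL * G' * transpose_mat BL) *\<^sub>v y = (BL * G') *\<^sub>v (transpose_mat BL *\<^sub>v y)"
      using assoc_mult_mat_vec[OF BLG _ y, of "transpose_mat BL"] BL by simp
    also have "\<dots> = BL *\<^sub>v v"
      unfolding v_def using assoc_mult_mat_vec[OF BL G'c, of "transpose_mat BL *\<^sub>v y"] BL y by simp
    finally have 1: "BL *\<^sub>v v = (BL * G' * transpose_mat BL) *\<^sub>v y" by simp
    have "X *\<^sub>v (BL *\<^sub>v v) = (X * (BL * G' * transpose_mat BL)) *\<^sub>v y"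
      unfolding 1 using assoc_mult_mat_vec[OF Xi(2) Kc y] by simp
    then have "X *\<^sub>v (BL *\<^sub>v v) = y" using Xi y by simp
    then have "Q *\<^sub>v v = v" using Qv[OF vc] by (simp add: v_def)
    then have "B_S B ng \<Gamma> e *\<^sub>v v = 0\<^sub>v ng" using BSv[OF vc] vc BG by (simp add: mult_zero_vec_right)
    then show ?thesis by (simp add: v_def G'_def BL_def)
  qed
qed

lemma Gamma'_sym:
  assumes G: "pos_diag \<Gamma> m" and e: "e \<in> carrier_vec m" and a: "a \<in> carrier_vec m" and b: "b \<in> carrier_vec m"
  shows "a \<bullet> (Gamma' \<Gamma> e *\<^sub>v b) = (Gamma' \<Gamma> e *\<^sub>v a) \<bullet> b"
  using a b unfolding Gamma'_mult(2)[OF G e a] Gamma'_mult(2)[OF G e b]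
  by (simp add: scalar_prod_def mult.assoc mult.left_commute)

lemma invariant_deriv_zero:
  assumes inc: "incidence_mat B (ng+nl) m" and conn: "connected_graph B" and ng: "0 < ng"
    and G: "pos_diag \<Gamma> m" and e: "e \<in> Omega m" and w: "w \<in> carrier_vec ng" and k: "k < nl"
  shows "(load_block B ng *\<^sub>v (Gamma' \<Gamma> e *\<^sub>v (transpose_mat (B_S B ng \<Gamma> e) *\<^sub>v w))) $ k = 0"
proof -
  define BL where "BL = load_block B ng"
  define G' where "G' = Gamma' \<Gamma> e"
  define S where "S = B_S B ng \<Gamma> e"
  define y :: "real vec" where "y = unit_vec nl k"
  have ec: "e \<in> carrier_vec m" using e by (auto simp: Omega_def)
  have BL: "BL \<in> carrier_mat nl m" using inc_dims[OF inc] by (auto simp: BL_def)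
  have Sc: "S \<in> carrier_mat ng m" using BS_facts(1)[OF inc conn ng G e] by (simp add: S_def)
  have G'c: "G' \<in> carrier_mat m m" using Gamma'_mult(1)[OF G ec ec] by (simp add: G'_def)
  have yc: "y \<in> carrier_vec nl" by (simp add: y_def)
  define d where "d = transpose_mat S *\<^sub>v w"
  have dc: "d \<in> carrier_vec m" using Sc w by (simp add: d_def)
  have ty: "transpose_mat BL *\<^sub>v y \<in> carrier_vec m" using BL yc by simp
  have "(BL *\<^sub>v (G' *\<^sub>v d)) $ k = y \<bullet> (BL *\<^sub>v (G' *\<^sub>v d))"
    using BL G'c dc k by (simp add: y_def scalar_prod_left_unit)
  also have "\<dots> = (transpose_mat BL *\<^sub>v y) \<bullet> (G' *\<^sub>v d)"
    using transpose_vec_mult_scalar[OF BL _ yc, of "G' *\<^sub>v d"] G'c dc by simp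
  also have "\<dots> = (G' *\<^sub>v (transpose_mat BL *\<^sub>v y)) \<bullet> d"
    unfolding G'_def by (rule Gamma'_sym[OF G ec ty dc])
  also have "\<dots> = d \<bullet> (G' *\<^sub>v (transpose_mat BL *\<^sub>v y))"
    using G'c ty dc by (intro comm_scalar_prod) auto
  also have "\<dots> = w \<bullet> (S *\<^sub>v (G' *\<^sub>v (transpose_mat BL *\<^sub>v y)))"
    unfolding d_def using transpose_vec_mult_scalar[OF Sc _ w] G'c ty by simp
  also have "S *\<^sub>v (G' *\<^sub>v (transpose_mat BL *\<^sub>v y)) = 0\<^sub>v ng"
    using BS_facts(3)[OF inc conn ng G e yc] by (simp add: S_def G'_def BL_def)
  finally show ?thesis using w by (simp add: BL_def G'_def S_def d_def)
qed

lemma gen_sum_zero: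
  assumes inc: "incidence_mat B (ng+nl) m" and z: "z \<in> carrier_vec m"
    and h: "load_block B ng *\<^sub>v z = 0\<^sub>v nl"
  shows "(\<Sum>i\<in>{0..<ng}. (gen_block B ng *\<^sub>v z) $ i) = 0"
proof -
  have Bc: "B \<in> carrier_mat (ng+nl) m" using inc by (simp add: incidence_mat_def)
  have g: "(gen_block B ng *\<^sub>v z) $ i = (\<Sum>j\<in>{0..<m}. B $$ (i,j) * z $ j)" if "i < ng" for i
    using that Bc z by (simp add: gen_block_def scalar_prod_def)
  have l: "(\<Sum>j\<in>{0..<m}. B $$ (ng+i,j) * z $ j) = 0" if "i < nl" for i
  proof -
    have "(load_block B ng *\<^sub>v z) $ i = (\<Sum>j\<in>{0..<m}. B $$ (ng+i,j) * z $ j)"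
      using that Bc z by (simp add: load_block_def scalar_prod_def)
    then show ?thesis using h that by simp
  qed
  have "(\<Sum>i\<in>{0..<ng}. (gen_block B ng *\<^sub>v z) $ i)
      = (\<Sum>i\<in>{0..<ng}. \<Sum>j\<in>{0..<m}. B $$ (i,j) * z $ j) + (\<Sum>i\<in>{0..<nl}. \<Sum>j\<in>{0..<m}. B $$ (ng+i,j) * z $ j)"
    using g l by simp
  also have "\<dots> = (\<Sum>i\<in>{0..<ng+nl}. \<Sum>j\<in>{0..<m}. B $$ (i,j) * z $ j)"
    by (rule sum_split_nat[symmetric])
  also have "\<dots> = (\<Sum>j\<in>{0..<m}. (\<Sum>i\<in>{0..<ng+nl}. B $$ (i,j)) * z $ j)"
    by (subst sum.swap) (simp add: sum_distrib_right)
  also have "\<dots> = 0" using col_sum_zero[OF inc] by simp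
  finally show ?thesis .
qed

theorem proposition5:
  fixes B \<Gamma> M A :: "real mat" and ng nl m :: nat
    and ub \<eta>b \<omega>b :: "real vec" and \<omega>0 :: real
  assumes graph: "incidence_mat B (ng + nl) m" "connected_graph B" "0 < ng"
    and Gam: "pos_diag \<Gamma> m" and Mpd: "pos_diag M ng" and Apd: "pos_diag A ng"
    and ub: "ub \<in> carrier_vec ng"
    and eta_b: "\<eta>b \<in> Omega m" "\<exists>\<theta> \<in> carrier_vec (ng + nl). \<eta>b = transpose_mat B *\<^sub>v \<theta>"
    and omega_b: "\<omega>b = \<omega>0 \<cdot>\<^sub>v ones_vec ng"
    and eq1: "transpose_mat (B_S B ng \<Gamma> \<eta>b) *\<^sub>v \<omega>b = zero_vec m"
    and eq2: "zero_vec ng = - (A *\<^sub>v \<omega>b) - gen_block B ng *\<^sub>v (\<Gamma> *\<^sub>v vsin \<eta>b) + ub"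
  shows "\<exists>\<delta>>0. \<forall>(I :: real set) (\<eta> :: real \<Rightarrow> real vec) (\<omega> :: real \<Rightarrow> real vec)
            (\<omega>d :: real \<Rightarrow> real vec) (u :: real \<Rightarrow> real vec).
     ((\<forall>a\<in>I. \<forall>b\<in>I. {a..b} \<subseteq> I) \<and> 0 \<in> I \<and>
      (\<forall>t\<in>I. \<eta> t \<in> Omega m \<and> \<omega> t \<in> carrier_vec ng \<and> \<omega>d t \<in> carrier_vec ng \<and>
               u t \<in> carrier_vec ng \<and>
               (\<forall>k<m. ((\<lambda>s. \<eta> s $ k) has_real_derivative
                    (transpose_mat (B_S B ng \<Gamma> (\<eta> t)) *\<^sub>v \<omega> t) $ k) (at t within I)) \<and>
               (\<forall>j<ng. ((\<lambda>s. \<omega> s $ j) has_real_derivative \<omega>d t $ j) (at t within I)) \<and>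
               M *\<^sub>v \<omega>d t = - (A *\<^sub>v \<omega> t) - gen_block B ng *\<^sub>v (\<Gamma> *\<^sub>v vsin (\<eta> t)) + u t) \<and>
      (\<forall>k<m. \<bar>\<eta> 0 $ k - \<eta>b $ k\<bar> < \<delta>) \<and> (\<forall>j<ng. \<bar>\<omega> 0 $ j - \<omega>b $ j\<bar> < \<delta>) \<and>
      load_block B ng *\<^sub>v (\<Gamma> *\<^sub>v vsin (\<eta> 0)) = load_block B ng *\<^sub>v (\<Gamma> *\<^sub>v vsin \<eta>b))
     \<longrightarrow> (\<forall>t\<in>I. ((\<lambda>s. W_fun M \<Gamma> \<eta>b \<omega>b (\<eta> s) (\<omega> s)) has_real_derivative
              (- ((\<omega> t - \<omega>b) \<bullet> (A *\<^sub>v (\<omega> t - \<omega>b))) + (\<omega> t - \<omega>b) \<bullet> (u t - ub)))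
              (at t within I))"
proof (intro exI[of _ "1::real"] conjI allI impI)
  show "0 < (1::real)" by simp
  fix I and \<eta> :: "real \<Rightarrow> real vec" and \<omega> \<omega>d u :: "real \<Rightarrow> real vec"
  assume H: "((\<forall>a\<in>I. \<forall>b\<in>I. {a..b} \<subseteq> I) \<and> 0 \<in> I \<and>
      (\<forall>t\<in>I. \<eta> t \<in> Omega m \<and> \<omega> t \<in> carrier_vec ng \<and> \<omega>d t \<in> carrier_vec ng \<and>
               u t \<in> carrier_vec ng \<and>
               (\<forall>k<m. ((\<lambda>s. \<eta> s $ k) has_real_derivative
                    (transpose_mat (B_S B ng \<Gamma> (\<eta> t)) *\<^sub>v \<omega> t) $ k) (at t within I)) \<and>
               (\<forall>j<ng. ((\<lambda>s. \<omega> s $ j) has_real_derivative \<omega>d t $ j) (at t within I)) \<and>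
               M *\<^sub>v \<omega>d t = - (A *\<^sub>v \<omega> t) - gen_block B ng *\<^sub>v (\<Gamma> *\<^sub>v vsin (\<eta> t)) + u t) \<and>
      (\<forall>k<m. \<bar>\<eta> 0 $ k - \<eta>b $ k\<bar> < 1) \<and> (\<forall>j<ng. \<bar>\<omega> 0 $ j - \<omega>b $ j\<bar> < 1) \<and>
      load_block B ng *\<^sub>v (\<Gamma> *\<^sub>v vsin (\<eta> 0)) = load_block B ng *\<^sub>v (\<Gamma> *\<^sub>v vsin \<eta>b))"
  have Iint: "\<forall>a\<in>I. \<forall>b\<in>I. {a..b} \<subseteq> I" and I0: "0 \<in> I" using H by blast+
  have etaO: "\<And>t. t \<in> I \<Longrightarrow> \<eta> t \<in> Omega m" using H by blast
  have omc: "\<And>t. t \<in> I \<Longrightarrow> \<omega> t \<in> carrier_vec ng" using H by blast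
  have wdc: "\<And>t. t \<in> I \<Longrightarrow> \<omega>d t \<in> carrier_vec ng" using H by blast
  have uc: "\<And>t. t \<in> I \<Longrightarrow> u t \<in> carrier_vec ng" using H by blast
  have deta: "\<And>t k. t \<in> I \<Longrightarrow> k < m \<Longrightarrow> ((\<lambda>s. \<eta> s $ k) has_real_derivative
                    (transpose_mat (B_S B ng \<Gamma> (\<eta> t)) *\<^sub>v \<omega> t) $ k) (at t within I)" using H by blast
  have domg: "\<And>t j. t \<in> I \<Longrightarrow> j < ng \<Longrightarrow> ((\<lambda>s. \<omega> s $ j) has_real_derivative \<omega>d t $ j) (at t within I)"
    using H by blast
  have Meq: "\<And>t. t \<in> I \<Longrightarrow> M *\<^sub>v \<omega>d t = - (A *\<^sub>v \<omega> t) - gen_block B ng *\<^sub>v (\<Gamma> *\<^sub>v vsin (\<eta> t)) + u t"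
    using H by blast
  have init: "load_block B ng *\<^sub>v (\<Gamma> *\<^sub>v vsin (\<eta> 0)) = load_block B ng *\<^sub>v (\<Gamma> *\<^sub>v vsin \<eta>b)"
    using H by blast
  have etac: "\<And>t. t \<in> I \<Longrightarrow> \<eta> t \<in> carrier_vec m" using etaO by (auto simp: Omega_def)
  have etabc: "\<eta>b \<in> carrier_vec m" using eta_b(1) by (auto simp: Omega_def)
  have Gc: "\<Gamma> \<in> carrier_mat m m" "diagonal_mat \<Gamma>" using Gam by (auto simp: pos_diag_def)
  have Mc: "M \<in> carrier_mat ng ng" "diagonal_mat M" using Mpd by (auto simp: pos_diag_def)
  have Ac: "A \<in> carrier_mat ng ng" "diagonal_mat A" using Apd by (auto simp: pos_diag_def)
  have BL: "load_block B ng \<in> carrier_mat nl m" and BG: "gen_block B ng \<in> carrier_mat ng m"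
    using inc_dims[OF graph(1)] by auto
  have Gs: "\<And>x. x \<in> carrier_vec m \<Longrightarrow> \<Gamma> *\<^sub>v vsin x = vec m (\<lambda>j. \<Gamma> $$ (j,j) * sin (x $ j))"
    using diag_mult_vec[OF Gc] by (auto simp: vsin_def)
  have Gcos: "\<And>x. x \<in> carrier_vec m \<Longrightarrow> \<Gamma> *\<^sub>v vcos x = vec m (\<lambda>j. \<Gamma> $$ (j,j) * cos (x $ j))"
    using diag_mult_vec[OF Gc] by (auto simp: vcos_def)
  have omb: "\<omega>b \<in> carrier_vec ng" "\<And>j. j < ng \<Longrightarrow> \<omega>b $ j = \<omega>0"
    using omega_b by (auto simp: ones_vec_def)
  have inv: "load_block B ng *\<^sub>v (\<Gamma> *\<^sub>v vsin (\<eta> t)) = load_block B ng *\<^sub>v (\<Gamma> *\<^sub>v vsin \<eta>b)"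
    if t: "t \<in> I" for t
  proof (rule eq_vecI)
    show "dim_vec (load_block B ng *\<^sub>v (\<Gamma> *\<^sub>v vsin (\<eta> t))) = dim_vec (load_block B ng *\<^sub>v (\<Gamma> *\<^sub>v vsin \<eta>b))"
      by simp
    fix k assume "k < dim_vec (load_block B ng *\<^sub>v (\<Gamma> *\<^sub>v vsin \<eta>b))"
    then have k: "k < nl" using BL by simp
    define f where "f s = (\<Sum>j\<in>{0..<m}. load_block B ng $$ (k,j) * (\<Gamma> $$ (j,j) * sin (\<eta> s $ j)))" for s
    have fv: "(load_block B ng *\<^sub>v (\<Gamma> *\<^sub>v vsin x)) $ k = (\<Sum>j\<in>{0..<m}. load_block B ng $$ (k,j) * (\<Gamma> $$ (j,j) * sin (x $ j)))"
      if x: "x \<in> carrier_vec m" for x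
      using Gs[OF x] BL k by (simp add: scalar_prod_def)
    have fd: "(f has_real_derivative 0) (at s within I)" if s: "s \<in> I" for s
    proof -
      define d where "d = transpose_mat (B_S B ng \<Gamma> (\<eta> s)) *\<^sub>v \<omega> s"
      have dc: "d \<in> carrier_vec m" using BS_facts(1)[OF graph Gam etaO[OF s]] omc[OF s] by (simp add: d_def)
      have "(f has_real_derivative (\<Sum>j\<in>{0..<m}. load_block B ng $$ (k,j) * (\<Gamma> $$ (j,j) * (cos (\<eta> s $ j) * d $ j)))) (at s within I)"
        unfolding f_def
        by (intro DERIV_sum DERIV_cmult DERIV_sin[THEN DERIV_chain2]) (use deta[OF s] in \<open>auto simp: d_def\<close>)
      moreover have "(\<Sum>j\<in>{0..<m}. load_block B ng $$ (k,j) * (\<Gamma> $$ (j,j) * (cos (\<eta> s $ j) * d $ j)))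
          = (load_block B ng *\<^sub>v (Gamma' \<Gamma> (\<eta> s) *\<^sub>v d)) $ k"
        using Gamma'_mult(2)[OF Gam etac[OF s] dc] BL k dc by (simp add: scalar_prod_def)
      moreover have "\<dots> = 0" unfolding d_def
        by (rule invariant_deriv_zero[OF graph Gam etaO[OF s] omc[OF s] k])
      ultimately show ?thesis by simp
    qed
    have "f t = f 0" by (rule const_on_interval'[OF Iint fd I0 t])
    then show "(load_block B ng *\<^sub>v (\<Gamma> *\<^sub>v vsin (\<eta> t))) $ k = (load_block B ng *\<^sub>v (\<Gamma> *\<^sub>v vsin \<eta>b)) $ k"
      using fv[OF etac[OF t]] fv[OF etac[OF I0]] init unfolding f_def by metis
  qed
  show "\<forall>t\<in>I. ((\<lambda>s. W_fun M \<Gamma> \<eta>b \<omega>b (\<eta> s) (\<omega> s)) has_real_derivative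
              (- ((\<omega> t - \<omega>b) \<bullet> (A *\<^sub>v (\<omega> t - \<omega>b))) + (\<omega> t - \<omega>b) \<bullet> (u t - ub)))
              (at t within I)"
  proof
    fix t assume t: "t \<in> I"
    define w where "w = \<omega> t"
    define wd where "wd = \<omega>d t"
    define d where "d = transpose_mat (B_S B ng \<Gamma> (\<eta> t)) *\<^sub>v w"
    define P where "P = gen_block B ng *\<^sub>v (\<Gamma> *\<^sub>v vsin (\<eta> t))"
    define Pb where "Pb = gen_block B ng *\<^sub>v (\<Gamma> *\<^sub>v vsin \<eta>b)"
    define z where "z = \<Gamma> *\<^sub>v vsin (\<eta> t) - \<Gamma> *\<^sub>v vsin \<eta>b"
    have wc: "w \<in> carrier_vec ng" using omc[OF t] by (simp add: w_def)
    have wdc': "wd \<in> carrier_vec ng" using wdc[OF t] by (simp add: wd_def)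
    have BSc: "B_S B ng \<Gamma> (\<eta> t) \<in> carrier_mat ng m" using BS_facts(1)[OF graph Gam etaO[OF t]] .
    have dc: "d \<in> carrier_vec m" using BSc wc by (simp add: d_def)
    have s1c: "\<Gamma> *\<^sub>v vsin (\<eta> t) \<in> carrier_vec m" "\<Gamma> *\<^sub>v vsin \<eta>b \<in> carrier_vec m"
      using Gc(1) by (auto intro!: carrier_vecI)
    have zc: "z \<in> carrier_vec m" using s1c by (simp add: z_def)
    have zk: "z $ k = \<Gamma> $$ (k,k) * (sin (\<eta> t $ k) - sin (\<eta>b $ k))" if "k < m" for k
    proof -
      have "z $ k = (\<Gamma> *\<^sub>v vsin (\<eta> t)) $ k - (\<Gamma> *\<^sub>v vsin \<eta>b) $ k"
        using that s1c[THEN carrier_vecD] unfolding z_def by simp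
      also have "\<dots> = \<Gamma> $$ (k,k) * sin (\<eta> t $ k) - \<Gamma> $$ (k,k) * sin (\<eta>b $ k)"
        using that unfolding Gs[OF etac[OF t]] Gs[OF etabc] by simp
      finally show ?thesis by (simp add: right_diff_distrib)
    qed
    have BLz: "load_block B ng *\<^sub>v z = 0\<^sub>v nl"
      unfolding z_def mult_minus_distrib_mat_vec[OF BL s1c] inv[OF t]
      by (rule minus_cancel_vec) (use BL in \<open>auto intro!: carrier_vecI\<close>)
    have BGz: "gen_block B ng *\<^sub>v z = P - Pb"
      unfolding z_def P_def Pb_def using mult_minus_distrib_mat_vec[OF BG s1c] .
    have Pc: "P \<in> carrier_vec ng" "Pb \<in> carrier_vec ng" using BG unfolding P_def Pb_def by (auto intro!: carrier_vecI)
    have F3: "(\<Sum>k\<in>{0..<m}. \<Gamma> $$ (k,k) * (sin (\<eta> t $ k) - sin (\<eta>b $ k)) * d $ k)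
        = (\<Sum>j\<in>{0..<ng}. w $ j * (P $ j - Pb $ j))"
    proof -
      have "(\<Sum>k\<in>{0..<m}. \<Gamma> $$ (k,k) * (sin (\<eta> t $ k) - sin (\<eta>b $ k)) * d $ k) = z \<bullet> d"
        using zc dc zk by (simp add: scalar_prod_def)
      also have "\<dots> = d \<bullet> z" using zc dc by (rule comm_scalar_prod)
      also have "\<dots> = w \<bullet> (B_S B ng \<Gamma> (\<eta> t) *\<^sub>v z)"
        unfolding d_def by (rule transpose_vec_mult_scalar[OF BSc zc wc])
      also have "B_S B ng \<Gamma> (\<eta> t) *\<^sub>v z = P - Pb"
        using BS_facts(2)[OF graph Gam etaO[OF t] zc BLz] BGz by simp
      also have "w \<bullet> (P - Pb) = (\<Sum>j\<in>{0..<ng}. w $ j * (P $ j - Pb $ j))"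
        using wc Pc by (simp add: scalar_prod_def)
      finally show ?thesis .
    qed
    have F4: "(\<Sum>j\<in>{0..<ng}. P $ j - Pb $ j) = 0"
    proof -
      have "(\<Sum>i\<in>{0..<ng}. (P - Pb) $ i) = (\<Sum>i\<in>{0..<ng}. P $ i - Pb $ i)"
        by (rule sum.cong) (use Pc[THEN carrier_vecD] in auto)
      then show ?thesis using gen_sum_zero[OF graph(1) zc BLz] unfolding BGz by simp
    qed
    have F1: "M $$ (j,j) * wd $ j = - (A $$ (j,j) * w $ j) - P $ j + u t $ j" if j: "j < ng" for j
    proof -
      have "(M *\<^sub>v wd) $ j = (- (A *\<^sub>v w) - P + u t) $ j" using arg_cong[OF Meq[OF t], of "\<lambda>v. v $ j"] unfolding wd_def w_def P_def by (simp only:)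
      moreover have "(M *\<^sub>v wd) $ j = M $$ (j,j) * wd $ j" using diag_mult_vec[OF Mc wdc'] j by simp
      moreover have "(A *\<^sub>v w) $ j = A $$ (j,j) * w $ j" using diag_mult_vec[OF Ac wc] j by simp
      moreover have "(- (A *\<^sub>v w) - P + u t) $ j = - ((A *\<^sub>v w) $ j) - P $ j + u t $ j"
        using j Pc[THEN carrier_vecD] uc[OF t, THEN carrier_vecD] Ac wc by simp
      ultimately show ?thesis by simp
    qed
    have F2: "ub $ j = A $$ (j,j) * \<omega>0 + Pb $ j" if j: "j < ng" for j
    proof -
      have "(0\<^sub>v ng :: real vec) $ j = (- (A *\<^sub>v \<omega>b) - Pb + ub) $ j" using arg_cong[OF eq2, of "\<lambda>v. v $ j"] unfolding Pb_def by (simp only:)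
      moreover have "(A *\<^sub>v \<omega>b) $ j = A $$ (j,j) * \<omega>0" using diag_mult_vec[OF Ac omb(1)] j omb(2) by simp
      moreover have "(- (A *\<^sub>v \<omega>b) - Pb + ub) $ j = - ((A *\<^sub>v \<omega>b) $ j) - Pb $ j + ub $ j"
        using j Pc[THEN carrier_vecD] ub[THEN carrier_vecD] Ac omb(1) by simp
      ultimately show ?thesis using j by simp
    qed
    define g where "g s = 1/2 * (\<Sum>j\<in>{0..<ng}. (\<omega> s $ j - \<omega>b $ j) * (M $$ (j,j) * (\<omega> s $ j - \<omega>b $ j)))
       - (\<Sum>k\<in>{0..<m}. \<Gamma> $$ (k,k) * cos (\<eta> s $ k)) + ones_vec m \<bullet> (\<Gamma> *\<^sub>v vcos \<eta>b)
       - (\<Sum>k\<in>{0..<m}. (\<Gamma> $$ (k,k) * sin (\<eta>b $ k)) * (\<eta> s $ k - \<eta>b $ k))" for s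
    have Wg: "W_fun M \<Gamma> \<eta>b \<omega>b (\<eta> s) (\<omega> s) = g s" if s: "s \<in> I" for s
    proof -
      have xc: "\<omega> s - \<omega>b \<in> carrier_vec ng" using omc[OF s] omb(1) by simp
      have dx: "dim_vec (\<omega> s - \<omega>b) = ng" "dim_vec (\<omega>b) = ng" using xc omb(1) by auto
      have "(\<omega> s - \<omega>b) \<bullet> (M *\<^sub>v (\<omega> s - \<omega>b))
          = (\<Sum>j\<in>{0..<ng}. (\<omega> s $ j - \<omega>b $ j) * (M $$ (j,j) * (\<omega> s $ j - \<omega>b $ j)))"
        unfolding diag_mult_vec[OF Mc xc] scalar_prod_def using dx
        by (intro sum.cong) auto
      moreover have "ones_vec (dim_vec (\<eta> s)) \<bullet> (\<Gamma> *\<^sub>v vcos (\<eta> s)) = (\<Sum>k\<in>{0..<m}. \<Gamma> $$ (k,k) * cos (\<eta> s $ k))"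
        using etac[OF s] unfolding Gcos[OF etac[OF s]] by (simp add: scalar_prod_def ones_vec_def)
      moreover have "dim_vec \<eta>b = m" using etabc by simp
      moreover have "(\<Gamma> *\<^sub>v vsin \<eta>b) \<bullet> (\<eta> s - \<eta>b) = (\<Sum>k\<in>{0..<m}. (\<Gamma> $$ (k,k) * sin (\<eta>b $ k)) * (\<eta> s $ k - \<eta>b $ k))"
        unfolding Gs[OF etabc] scalar_prod_def using etac[OF s] etabc
        by (intro sum.cong) auto
      ultimately show ?thesis unfolding W_fun_def g_def by simp
    qed
    define D where "D = 1/2 * (\<Sum>j\<in>{0..<ng}. 2 * ((w $ j - \<omega>b $ j) * (M $$ (j,j) * wd $ j)))
       - (\<Sum>k\<in>{0..<m}. \<Gamma> $$ (k,k) * (- sin (\<eta> t $ k) * d $ k)) + 0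
       - (\<Sum>k\<in>{0..<m}. (\<Gamma> $$ (k,k) * sin (\<eta>b $ k)) * d $ k)"
    have deta': "((\<lambda>s. \<eta> s $ k) has_real_derivative d $ k) (at t within I)" if "k < m" for k
      using deta[OF t that] by (simp add: d_def w_def)
    have domg': "((\<lambda>s. \<omega> s $ j) has_real_derivative wd $ j) (at t within I)" if "j < ng" for j
      using domg[OF t that] by (simp add: wd_def)
    have da: "((\<lambda>s. (\<omega> s $ j - \<omega>b $ j) * (M $$ (j,j) * (\<omega> s $ j - \<omega>b $ j))) has_real_derivative
        2 * ((w $ j - \<omega>b $ j) * (M $$ (j,j) * wd $ j))) (at t within I)" if j: "j < ng" for j
      by (rule DERIV_cong[OF DERIV_mult[OF DERIV_diff[OF domg'[OF j] DERIV_const] DERIV_cmult[OF DERIV_diff[OF domg'[OF j] DERIV_const]]]])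
        (simp add: w_def algebra_simps)
    have db: "((\<lambda>s. \<Gamma> $$ (k,k) * cos (\<eta> s $ k)) has_real_derivative
        \<Gamma> $$ (k,k) * (- sin (\<eta> t $ k) * d $ k)) (at t within I)" if k: "k < m" for k
      by (rule DERIV_cmult[OF DERIV_cos[THEN DERIV_chain2, OF deta'[OF k]]])
    have dcc: "((\<lambda>s. (\<Gamma> $$ (k,k) * sin (\<eta>b $ k)) * (\<eta> s $ k - \<eta>b $ k)) has_real_derivative
        (\<Gamma> $$ (k,k) * sin (\<eta>b $ k)) * d $ k) (at t within I)" if k: "k < m" for k
      by (rule DERIV_cong[OF DERIV_cmult[OF DERIV_diff[OF deta'[OF k] DERIV_const]]]) simp
    have dg: "(g has_real_derivative D) (at t within I)"
      unfolding g_def D_def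
      by (intro DERIV_diff DERIV_add DERIV_cmult DERIV_const DERIV_sum da db dcc) auto
    have dW: "((\<lambda>s. W_fun M \<Gamma> \<eta>b \<omega>b (\<eta> s) (\<omega> s)) has_real_derivative D) (at t within I)"
      by (rule has_field_derivative_transform_within[where d=1, OF dg]) (auto simp: t Wg)
    have eT: "- ((\<omega> t - \<omega>b) \<bullet> (A *\<^sub>v (\<omega> t - \<omega>b))) + (\<omega> t - \<omega>b) \<bullet> (u t - ub)
       = (\<Sum>j\<in>{0..<ng}. - ((w $ j - \<omega>0) * (A $$ (j,j) * (w $ j - \<omega>0))) + (w $ j - \<omega>0) * (u t $ j - ub $ j))"
    proof -
      have xc: "w - \<omega>b \<in> carrier_vec ng" using wc omb(1) by simp
      have "(w - \<omega>b) \<bullet> (A *\<^sub>v (w - \<omega>b)) = (\<Sum>j\<in>{0..<ng}. (w $ j - \<omega>0) * (A $$ (j,j) * (w $ j - \<omega>0)))"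
        unfolding diag_mult_vec[OF Ac xc] scalar_prod_def using xc omb wc
        by (intro sum.cong) auto
      moreover have "(w - \<omega>b) \<bullet> (u t - ub) = (\<Sum>j\<in>{0..<ng}. (w $ j - \<omega>0) * (u t $ j - ub $ j))"
        unfolding scalar_prod_def using xc omb wc uc[OF t] ub
        by (intro sum.cong) auto
      ultimately show ?thesis by (simp add: w_def sum_negf[symmetric] sum.distrib[symmetric])
    qed
    have eD: "D = (\<Sum>j\<in>{0..<ng}. (w $ j - \<omega>0) * (- (A $$ (j,j) * w $ j) - P $ j + u t $ j) + w $ j * (P $ j - Pb $ j))"
    proof -
      have "D = (\<Sum>j\<in>{0..<ng}. (w $ j - \<omega>0) * (M $$ (j,j) * wd $ j))
          + (\<Sum>k\<in>{0..<m}. \<Gamma> $$ (k,k) * (sin (\<eta> t $ k) - sin (\<eta>b $ k)) * d $ k)"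
      proof -
        have 1: "1/2 * (\<Sum>j\<in>{0..<ng}. 2 * ((w $ j - \<omega>b $ j) * (M $$ (j,j) * wd $ j)))
            = (\<Sum>j\<in>{0..<ng}. (w $ j - \<omega>0) * (M $$ (j,j) * wd $ j))"
          by (simp add: sum_distrib_left[symmetric] omb(2))
        have 2: "- (\<Sum>k\<in>{0..<m}. \<Gamma> $$ (k,k) * (- sin (\<eta> t $ k) * d $ k))
            - (\<Sum>k\<in>{0..<m}. (\<Gamma> $$ (k,k) * sin (\<eta>b $ k)) * d $ k)
            = (\<Sum>k\<in>{0..<m}. \<Gamma> $$ (k,k) * (sin (\<eta> t $ k) - sin (\<eta>b $ k)) * d $ k)"
          by (simp add: sum_negf[symmetric] sum_subtractf[symmetric] algebra_simps)
        show ?thesis unfolding D_def using 1 2 by simp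
      qed
      also have "(\<Sum>j\<in>{0..<ng}. (w $ j - \<omega>0) * (M $$ (j,j) * wd $ j))
          = (\<Sum>j\<in>{0..<ng}. (w $ j - \<omega>0) * (- (A $$ (j,j) * w $ j) - P $ j + u t $ j))"
        by (intro sum.cong) (auto simp: F1)
      finally show ?thesis unfolding F3 by (simp add: sum.distrib)
    qed
    have "D = - ((\<omega> t - \<omega>b) \<bullet> (A *\<^sub>v (\<omega> t - \<omega>b))) + (\<omega> t - \<omega>b) \<bullet> (u t - ub)"
    proof -
      have "D = (\<Sum>j\<in>{0..<ng}. - ((w $ j - \<omega>0) * (A $$ (j,j) * (w $ j - \<omega>0))) + (w $ j - \<omega>0) * (u t $ j - ub $ j)
               + \<omega>0 * (P $ j - Pb $ j))"
        unfolding eD by (intro sum.cong) (auto simp: F2 algebra_simps)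
      also have "\<dots> = (\<Sum>j\<in>{0..<ng}. - ((w $ j - \<omega>0) * (A $$ (j,j) * (w $ j - \<omega>0))) + (w $ j - \<omega>0) * (u t $ j - ub $ j))
          + \<omega>0 * (\<Sum>j\<in>{0..<ng}. P $ j - Pb $ j)"
        by (simp add: sum.distrib sum_distrib_left)
      finally show ?thesis using eT F4 by simp
    qed
    then show "((\<lambda>s. W_fun M \<Gamma> \<eta>b \<omega>b (\<eta> s) (\<omega> s)) has_real_derivative
              (- ((\<omega> t - \<omega>b) \<bullet> (A *\<^sub>v (\<omega> t - \<omega>b))) + (\<omega> t - \<omega>b) \<bullet> (u t - ub)))
              (at t within I)" using dW by simp
  qed
qed

end
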